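(* Let $P=\{x\in\mathbb R^n : Ax=b,\ x\ge 0\}$ be a polyhedron in standard form. Then the cone $$C_A=\{(y^+,y^-)\in\mathbb R^{2n} : A(y^+-y^-)=0,\ y^+,y^-\ge 0\}$$ is pointed and is generated by a set of extreme rays $S\cup T'$, where: (1) $S:=\{(y^+,y^-) : y^+_i=\max\{g_i,0\},\ y^-_i=\max\{-g_i,0\}\ (i\le n),\ g\in\mathcal C(A)\}$ (these give the circuits of $P$); (2) $T'$ is a subset of $T:=\{(y^+,y^-) : \text{for some } i\le n,\ y^+_i=y^-_i=1,\ y^+_j=y^-_j=0\ (j\ne i)\}$ with $|T'|\le n$. That is, the extreme rays of $C_A$ are exactly the rays spanned by the elements of $S\cup T'$.
   Context: $\mathcal C(A)$ denotes the set of circuits of the standard form polyhedron: all $g\in\ker(A)\setminus\{0\}$, normalized to coprime integer components, that are support-minimal in $\ker(A)\setminus\{0\}$ (no $x\in\ker(A)\setminus\{0\}$ has $\operatorname{supp}(x)\subsetneq\operatorname{supp}(g)$). *)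

theory Defs
  imports "HOL-Analysis.Analysis"
begin

definition supp :: "real^'n \<Rightarrow> 'n set" where
  "supp x = {i. x $ i \<noteq> 0}"

definition circuits :: "real^'n^'m \<Rightarrow> (real^'n) set" where
  "circuits A = {g. A *v g = 0 \<and> g \<noteq> 0
      \<and> (\<exists>z :: 'n \<Rightarrow> int. (\<forall>i. g $ i = of_int (z i)) \<and> Gcd (range z) = 1)
      \<and> \<not> (\<exists>x. A *v x = 0 \<and> x \<noteq> 0 \<and> supp x \<subset> supp g)}"

definition CA :: "real^'n^'m \<Rightarrow> ((real^'n) \<times> (real^'n)) set" where
  "CA A = {p. A *v (fst p - snd p) = 0 \<and> (\<forall>i. fst p $ i \<ge> 0) \<and> (\<forall>i. snd p $ i \<ge> 0)}"

definition S_set :: "real^'n^'m \<Rightarrow> ((real^'n) \<times> (real^'n)) set" where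
  "S_set A = {((\<chi> i. max (g $ i) 0), (\<chi> i. max (- (g $ i)) 0)) | g. g \<in> circuits A}"

definition T_set :: "((real^'n) \<times> (real^'n)) set" where
  "T_set = {(axis i 1, axis i 1) | i. True}"

definition pointed :: "'a::real_vector set \<Rightarrow> bool" where
  "pointed C \<longleftrightarrow> C \<inter> uminus ` C = {0}"

definition ray :: "'a::real_vector \<Rightarrow> 'a set" where
  "ray v = {t *\<^sub>R v | t. t \<ge> 0}"

definition extreme_ray :: "'a::real_vector set \<Rightarrow> 'a \<Rightarrow> bool" where
  "extreme_ray C v \<longleftrightarrow> v \<noteq> 0 \<and> ray v face_of C"

end

theory Submission
  imports Defs
begin

type_synonym 'n pv = "(real^'n) \<times> (real^'n)"

definition subsupp :: "'n::finite pv \<Rightarrow> 'n::finite pv \<Rightarrow> bool" where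
  "subsupp w v \<longleftrightarrow> (\<forall>i. (fst v $ i = 0 \<longrightarrow> fst w $ i = 0) \<and> (snd v $ i = 0 \<longrightarrow> snd w $ i = 0))"

definition onedim :: "real^'n^'m \<Rightarrow> 'n::finite pv \<Rightarrow> bool" where
  "onedim A v \<longleftrightarrow> (\<forall>w. A *v (fst w - snd w) = 0 \<and> subsupp w v \<longrightarrow> (\<exists>c. w = c *\<^sub>R v))"

lemma CA_iff: "p \<in> CA A \<longleftrightarrow> A *v (fst p - snd p) = 0 \<and> (\<forall>i. fst p $ i \<ge> 0) \<and> (\<forall>i. snd p $ i \<ge> 0)"
  by (simp add: CA_def)

lemma kernel_lin:
  fixes A :: "real^'n^'m"
  shows "A *v (fst (v + e *\<^sub>R w) - snd (v + e *\<^sub>R w)) = A *v (fst v - snd v) + e *\<^sub>R (A *v (fst w - snd w))"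
proof -
  have "fst (v + e *\<^sub>R w) - snd (v + e *\<^sub>R w) = (fst v - snd v) + e *\<^sub>R (fst w - snd w)"
    by (simp add: algebra_simps)
  moreover have "A *v (e *\<^sub>R y) = e *\<^sub>R (A *v y)" for y :: "real^'n"
    by (rule matrix_vector_mult_scaleR)
  ultimately show ?thesis by (simp only: matrix_vector_right_distrib)
qed

lemma perturb:
  fixes A :: "real^'n^'m"
  assumes v: "v \<in> CA A" and kw: "A *v (fst w - snd w) = 0" and sw: "subsupp w v"
  shows "\<exists>e>0. v + e *\<^sub>R w \<in> CA A \<and> v + (-e) *\<^sub>R w \<in> CA A"
proof -
  define f1 where "f1 i = (if fst w $ i = 0 then 1 else fst v $ i / \<bar>fst w $ i\<bar>)" for i
  define f2 where "f2 i = (if snd w $ i = 0 then 1 else snd v $ i / \<bar>snd w $ i\<bar>)" for i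
  define e where "e = Min (range (\<lambda>i. min (f1 i) (f2 i)))"
  have vnn: "fst v $ i \<ge> 0" "snd v $ i \<ge> 0" for i using v by (auto simp: CA_iff)
  have f1p: "f1 i > 0" for i
    using sw vnn[of i] unfolding f1_def subsupp_def
    by (cases "fst v $ i = 0") (auto intro!: divide_pos_pos)
  have f2p: "f2 i > 0" for i
    using sw vnn[of i] unfolding f2_def subsupp_def
    by (cases "snd v $ i = 0") (auto intro!: divide_pos_pos)
  have epos: "e > 0" unfolding e_def using f1p f2p by (subst Min_gr_iff) auto
  have ele0: "e \<le> min (f1 i) (f2 i)" for i unfolding e_def
    by (rule Min_le) auto
  have ele: "e \<le> f1 i" "e \<le> f2 i" for i using ele0[of i] by auto
  have b1: "e * \<bar>fst w $ i\<bar> \<le> fst v $ i" for i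
  proof (cases "fst w $ i = 0")
    case False
    then have "e \<le> fst v $ i / \<bar>fst w $ i\<bar>" using ele(1)[of i] by (simp add: f1_def)
    then show ?thesis using False by (simp add: le_divide_eq)
  qed (use vnn in auto)
  have b2: "e * \<bar>snd w $ i\<bar> \<le> snd v $ i" for i
  proof (cases "snd w $ i = 0")
    case False
    then have "e \<le> snd v $ i / \<bar>snd w $ i\<bar>" using ele(2)[of i] by (simp add: f2_def)
    then show ?thesis using False by (simp add: le_divide_eq)
  qed (use vnn in auto)
  have k: "A *v (fst v - snd v) = 0" using v by (simp add: CA_iff)
  have cc: "v + c *\<^sub>R w \<in> CA A" if "\<bar>c\<bar> = e" for c
  proof -
    have "fst v $ i + c * fst w $ i \<ge> 0" for i
    proof -
      have "\<bar>c\<bar> * \<bar>fst w $ i\<bar> \<le> fst v $ i" using b1[of i] that by simp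
      then show ?thesis using abs_mult[of c "fst w $ i"] abs_ge_minus_self[of "c * fst w $ i"] by linarith
    qed
    moreover have "snd v $ i + c * snd w $ i \<ge> 0" for i
    proof -
      have "\<bar>c\<bar> * \<bar>snd w $ i\<bar> \<le> snd v $ i" using b2[of i] that by simp
      then show ?thesis using abs_mult[of c "snd w $ i"] abs_ge_minus_self[of "c * snd w $ i"] by linarith
    qed
    ultimately show ?thesis unfolding CA_iff kernel_lin using k kw by simp
  qed
  have "v + e *\<^sub>R w \<in> CA A" using cc[of e] epos by simp
  moreover have "v + (-e) *\<^sub>R w \<in> CA A" using cc[of "-e"] epos by simp
  ultimately show ?thesis using epos by blast
qed

lemma pv_nonzero_pos:
  assumes "v \<in> CA A" "v \<noteq> 0"
  shows "\<exists>i. fst v $ i > 0 \<or> snd v $ i > 0"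
proof (rule ccontr)
  assume nt: "\<not> ?thesis"
  have "fst v $ i = 0 \<and> snd v $ i = 0" for i
  proof -
    have "\<not> fst v $ i > 0" "\<not> snd v $ i > 0" using nt by auto
    moreover have "fst v $ i \<ge> 0" "snd v $ i \<ge> 0" using assms(1) by (auto simp: CA_iff)
    ultimately show ?thesis by linarith
  qed
  then have "fst v = 0" "snd v = 0" by (auto simp: vec_eq_iff)
  then show False using assms(2) by (simp add: prod_eq_iff)
qed

lemma face_imp_onedim:
  assumes v: "v \<in> CA A" and f: "ray v face_of CA A"
  shows "onedim A v"
  unfolding onedim_def
proof (intro allI impI)
  fix w assume "A *v (fst w - snd w) = 0 \<and> subsupp w v"
  then obtain e where e: "e > 0" "v + e *\<^sub>R w \<in> CA A" "v + (-e) *\<^sub>R w \<in> CA A"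
    using perturb[OF v] by blast
  show "\<exists>c. w = c *\<^sub>R v"
  proof (cases "w = 0")
    case True then show ?thesis by (intro exI[of _ 0]) simp
  next
    case False
    have h: "(1/2::real) *\<^sub>R v + (1/2) *\<^sub>R v = v" by (simp flip: scaleR_add_left)
    have mid: "midpoint (v + e *\<^sub>R w) (v + (-e) *\<^sub>R w) = v"
      by (simp add: midpoint_def algebra_simps h)
    have d: "v + e *\<^sub>R w - (v + (-e) *\<^sub>R w) = (e + e) *\<^sub>R w"
    proof -
      have "v + e *\<^sub>R w - (v + (-e) *\<^sub>R w) = e *\<^sub>R w + e *\<^sub>R w" by (simp add: algebra_simps)
      also have "\<dots> = (e + e) *\<^sub>R w" by (rule scaleR_add_left[symmetric])
      finally show ?thesis .
    qed
    have "(e + e) *\<^sub>R w \<noteq> 0" using False e(1) by simp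
    moreover have "(e + e) *\<^sub>R w = 0" if eq: "v + e *\<^sub>R w = v + (-e) *\<^sub>R w"
    proof -
      have "v + e *\<^sub>R w - (v + (-e) *\<^sub>R w) = 0" using eq by (simp only: right_minus_eq)
      then show ?thesis by (metis d)
    qed
    ultimately have neq: "v + e *\<^sub>R w \<noteq> v + (-e) *\<^sub>R w" by blast
    have "midpoint (v + e *\<^sub>R w) (v + (-e) *\<^sub>R w) \<in> open_segment (v + e *\<^sub>R w) (v + (-e) *\<^sub>R w)"
      by (rule midpoint_in_open_segment[THEN iffD2, OF neq])
    then have seg: "v \<in> open_segment (v + e *\<^sub>R w) (v + (-e) *\<^sub>R w)" by (simp only: mid)
    have vr: "v \<in> ray v" unfolding ray_def by (auto intro: exI[of _ 1])
    have fo: "\<forall>a\<in>CA A. \<forall>b\<in>CA A. \<forall>x\<in>ray v. x \<in> open_segment a b \<longrightarrow> a \<in> ray v \<and> b \<in> ray v"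
      using f unfolding face_of_def by blast
    have "v + e *\<^sub>R w \<in> ray v" using fo e(2,3) vr seg by blast
    then obtain t where "v + e *\<^sub>R w = t *\<^sub>R v" unfolding ray_def by auto
    then have ew: "e *\<^sub>R w = (t - 1) *\<^sub>R v" by (simp add: algebra_simps)
    have "w = (1 / e) *\<^sub>R (e *\<^sub>R w)" using e(1) by simp
    also have "\<dots> = ((t - 1) / e) *\<^sub>R v" by (simp add: ew)
    finally show ?thesis by blast
  qed
qed

lemma ray_subset:
  assumes "v \<in> CA A" shows "ray v \<subseteq> CA A"
proof
  fix x assume "x \<in> ray v"
  then obtain t where t: "x = t *\<^sub>R v" "t \<ge> 0" unfolding ray_def by auto
  have "fst x - snd x = t *\<^sub>R (fst v - snd v)" using t by (simp add: scaleR_diff_right)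
  then have "A *v (fst x - snd x) = 0" using assms by (simp add: CA_iff matrix_vector_mult_scaleR)
  then show "x \<in> CA A" using assms t by (auto simp: CA_iff)
qed

lemma seg_end_in_ray:
  fixes A :: "real^'n^'m"
  assumes v: "v \<in> CA A" "v \<noteq> 0" and od: "onedim A v"
    and a: "a \<in> CA A" and b: "b \<in> CA A" and u: "0 < u" "u < 1"
    and x: "(1 - u) *\<^sub>R a + u *\<^sub>R b = t *\<^sub>R v"
  shows "a \<in> ray v"
proof -
  have s: "subsupp a v" unfolding subsupp_def
  proof (intro allI conjI impI)
    fix i
    have "(1 - u) * fst a $ i + u * fst b $ i = t * fst v $ i"
         "(1 - u) * snd a $ i + u * snd b $ i = t * snd v $ i"
      using arg_cong[OF x, of "\<lambda>p. fst p $ i"] arg_cong[OF x, of "\<lambda>p. snd p $ i"] by auto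
    moreover have "fst a $ i \<ge> 0" "fst b $ i \<ge> 0" "snd a $ i \<ge> 0" "snd b $ i \<ge> 0"
      using a b by (auto simp: CA_iff)
    moreover have "(1 - u) > 0" using u by simp
    moreover have "(1 - u) * fst a $ i \<ge> 0" "u * fst b $ i \<ge> 0" "(1 - u) * snd a $ i \<ge> 0" "u * snd b $ i \<ge> 0"
      using calculation u by auto
    ultimately have "fst v $ i = 0 \<Longrightarrow> (1 - u) * fst a $ i = 0" "snd v $ i = 0 \<Longrightarrow> (1 - u) * snd a $ i = 0"
      by (metis add_nonneg_eq_0_iff mult_zero_right)+
    then show "fst v $ i = 0 \<Longrightarrow> fst a $ i = 0" "snd v $ i = 0 \<Longrightarrow> snd a $ i = 0"
      using u by auto
  qed
  have "A *v (fst a - snd a) = 0" using a by (simp add: CA_iff)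
  with s od obtain c where c: "a = c *\<^sub>R v" unfolding onedim_def by blast
  obtain i where i: "fst v $ i > 0 \<or> snd v $ i > 0" using pv_nonzero_pos[OF v] by blast
  have "fst a $ i \<ge> 0" "snd a $ i \<ge> 0" using a by (auto simp: CA_iff)
  then have "c \<ge> 0" using i c
    by (auto simp: zero_le_mult_iff)
  then show ?thesis using c unfolding ray_def by blast
qed

lemma onedim_imp_face:
  fixes A :: "real^'n^'m"
  assumes v: "v \<in> CA A" "v \<noteq> 0" and od: "onedim A v"
  shows "ray v face_of CA A"
  unfolding face_of_def
proof (intro conjI ballI impI)
  show "ray v \<subseteq> CA A" by (rule ray_subset[OF v(1)])
  show "convex (ray v)" unfolding convex_def
  proof (intro ballI allI impI)
    fix p q and x y :: real assume p: "p \<in> ray v" and q: "q \<in> ray v" and xy: "0 \<le> x" "0 \<le> y" "x + y = 1"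
    obtain t s where ts: "p = t *\<^sub>R v" "t \<ge> 0" "q = s *\<^sub>R v" "s \<ge> 0" using p q unfolding ray_def by auto
    have "x *\<^sub>R p + y *\<^sub>R q = (x * t + y * s) *\<^sub>R v" using ts by (simp add: algebra_simps)
    moreover have "x * t + y * s \<ge> 0" using ts xy by simp
    ultimately show "x *\<^sub>R p + y *\<^sub>R q \<in> ray v" unfolding ray_def by blast
  qed
  fix a b x assume a: "a \<in> CA A" and b: "b \<in> CA A" and xr: "x \<in> ray v"
    and xs: "x \<in> open_segment a b"
  obtain t where t: "x = t *\<^sub>R v" using xr unfolding ray_def by auto
  obtain u where u: "0 < u" "u < 1" "x = (1 - u) *\<^sub>R a + u *\<^sub>R b"
    using xs unfolding in_segment by auto
  show "a \<in> ray v" by (metis seg_end_in_ray[OF v od a b u(1,2)] u(3) t)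
  have "(1 - (1 - u)) *\<^sub>R b + (1 - u) *\<^sub>R a = t *\<^sub>R v" using u t by (simp add: algebra_simps)
  moreover have "0 < 1 - u" "1 - u < (1::real)" using u by auto
  ultimately show "b \<in> ray v" using seg_end_in_ray[OF v od b a] by blast
qed


definition posp :: "real^'n::finite \<Rightarrow> 'n pv" where
  "posp g = ((\<chi> i. max (g $ i) 0), (\<chi> i. max (- (g $ i)) 0))"

lemma posp_diff: "fst (posp g) - snd (posp g) = g"
  by (simp add: posp_def vec_eq_iff max_def)

lemma S_set_posp: "S_set A = posp ` circuits A"
  by (auto simp: S_set_def posp_def)

lemma circuit_unique:
  fixes A :: "real^'n::finite^'m"
  assumes g: "g \<in> circuits A" and x: "A *v x = 0" and s: "\<And>i. g $ i = 0 \<Longrightarrow> x $ i = 0"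
  shows "\<exists>c. x = c *\<^sub>R g"
proof -
  have g0: "g \<noteq> 0" and kg: "A *v g = 0"
    and mn: "\<not> (\<exists>x. A *v x = 0 \<and> x \<noteq> 0 \<and> supp x \<subset> supp g)"
    using g by (auto simp: circuits_def)
  obtain k where k: "g $ k \<noteq> 0" using g0 by (auto simp: vec_eq_iff)
  define c where "c = x $ k / g $ k"
  define y where "y = x - c *\<^sub>R g"
  have ky: "A *v y = 0" unfolding y_def
    by (simp add: matrix_vector_mult_diff_distrib matrix_vector_mult_scaleR x kg)
  have "supp y \<subseteq> supp g" unfolding supp_def y_def using s by auto
  moreover have "k \<notin> supp y" unfolding supp_def y_def c_def using k by simp
  moreover have "k \<in> supp g" unfolding supp_def using k by simp
  ultimately have "supp y \<subset> supp g" by blast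
  with mn ky have "y = 0" by blast
  then show ?thesis unfolding y_def by (intro exI[of _ c]) simp
qed

lemma S_elem:
  fixes A :: "real^'n::finite^'m"
  assumes g: "g \<in> circuits A"
  shows "posp g \<in> CA A" "posp g \<noteq> 0" "onedim A (posp g)"
proof -
  have g0: "g \<noteq> 0" and kg: "A *v g = 0" using g by (auto simp: circuits_def)
  show "posp g \<in> CA A" unfolding CA_iff posp_diff using kg by (simp add: posp_def)
  show "posp g \<noteq> 0" using posp_diff[of g] g0 by auto
  show "onedim A (posp g)" unfolding onedim_def
  proof (intro allI impI)
    fix w assume "A *v (fst w - snd w) = 0 \<and> subsupp w (posp g)"
    then have kw: "A *v (fst w - snd w) = 0" and sw: "subsupp w (posp g)" by auto
    have "\<And>i. g $ i = 0 \<Longrightarrow> (fst w - snd w) $ i = 0"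
      using sw unfolding subsupp_def posp_def by simp
    then obtain c where c: "fst w - snd w = c *\<^sub>R g" using circuit_unique[OF g kw] by blast
    have "fst w $ i = c * fst (posp g) $ i \<and> snd w $ i = c * snd (posp g) $ i" for i
    proof -
      have ci: "fst w $ i - snd w $ i = c * g $ i" using arg_cong[OF c, of "\<lambda>x. x $ i"] by simp
      have s1: "max (g $ i) 0 = 0 \<Longrightarrow> fst w $ i = 0" and s2: "max (- g $ i) 0 = 0 \<Longrightarrow> snd w $ i = 0"
        using sw unfolding subsupp_def posp_def by auto
      show ?thesis
      proof (cases "g $ i > 0")
        case True then show ?thesis using ci s2 by (simp add: posp_def)
      next
        case False
        then show ?thesis using ci s1 s2 by (cases "g $ i = 0") (auto simp: posp_def)
      qed
    qed
    then have "w = c *\<^sub>R posp g" by (simp add: prod_eq_iff vec_eq_iff)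
    then show "\<exists>c. w = c *\<^sub>R posp g" by blast
  qed
qed

lemma T_elem:
  fixes A :: "real^'n::finite^'m"
  assumes col: "A *v axis i 1 \<noteq> 0"
  shows "(axis i 1, axis i 1) \<in> CA A" "(axis i 1, axis i 1) \<noteq> (0 :: 'n pv)"
    "onedim A (axis i 1, axis i 1)"
proof -
  show "(axis i 1, axis i 1) \<in> CA A" by (simp add: CA_iff axis_def)
  have "axis i (1::real) \<noteq> 0" by (simp add: axis_eq_0_iff)
  then show "(axis i 1, axis i 1) \<noteq> (0 :: 'n pv)" by (simp add: zero_prod_def)
  show "onedim A (axis i 1, axis i 1)" unfolding onedim_def
  proof (intro allI impI)
    fix w :: "'n pv" assume "A *v (fst w - snd w) = 0 \<and> subsupp w (axis i 1, axis i 1)"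
    then have kw: "A *v (fst w - snd w) = 0" and sw: "subsupp w (axis i 1, axis i 1)" by auto
    have z: "j \<noteq> i \<Longrightarrow> fst w $ j = 0 \<and> snd w $ j = 0" for j
      using sw unfolding subsupp_def by (auto simp: axis_def)
    have "fst w - snd w = (fst w $ i - snd w $ i) *\<^sub>R axis i 1"
      using z by (auto simp: vec_eq_iff axis_def)
    then have "(fst w $ i - snd w $ i) *\<^sub>R (A *v axis i 1) = 0"
      using kw by (simp add: matrix_vector_mult_scaleR)
    then have e: "fst w $ i = snd w $ i" using col by simp
    have "w = fst w $ i *\<^sub>R (axis i 1, axis i 1)"
      using z e by (auto simp: prod_eq_iff vec_eq_iff axis_def)
    then show "\<exists>c. w = c *\<^sub>R (axis i 1, axis i 1)" by blast
  qed
qed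


lemma rat_functional:
  "\<exists>\<phi>::real\<Rightarrow>real. (\<forall>x. \<phi> x \<in> \<rat>) \<and> \<phi> 1 = 1 \<and> (\<forall>x y. \<phi> (x + y) = \<phi> x + \<phi> y)
     \<and> (\<forall>q x. q \<in> \<rat> \<longrightarrow> \<phi> (q * x) = q * \<phi> x)"
proof -
  interpret V: vector_space "\<lambda>(q::rat) (x::real). of_rat q * x"
    by unfold_locales (auto simp: algebra_simps of_rat_add of_rat_mult)
  define B where "B = V.extend_basis {1}"
  have ind1: "V.independent {1::real}"
    by (simp add: V.independent_insert V.span_empty)
  have iB: "V.independent B" unfolding B_def by (rule V.independent_extend_basis[OF ind1])
  have sB: "V.span B = UNIV" unfolding B_def by (rule V.span_extend_basis[OF ind1])
  have oB: "1 \<in> B" unfolding B_def using V.extend_basis_superset[OF ind1] by auto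
  define \<phi> :: "real \<Rightarrow> real" where "\<phi> x = of_rat (V.representation B x 1)" for x
  show ?thesis
  proof (intro exI[of _ \<phi>] conjI allI impI)
    show "\<phi> x \<in> \<rat>" for x unfolding \<phi>_def by simp
    show "\<phi> 1 = 1" unfolding \<phi>_def by (simp add: V.representation_basis[OF iB oB])
    show "\<phi> (x + y) = \<phi> x + \<phi> y" for x y
      unfolding \<phi>_def by (simp add: V.representation_add[OF iB] sB of_rat_add)
    fix q x :: real assume "q \<in> \<rat>"
    then obtain r where r: "q = of_rat r" by (auto elim: Rats_cases)
    show "\<phi> (q * x) = q * \<phi> x"
      using V.representation_scale[OF iB, of x r] unfolding \<phi>_def r by (simp add: sB of_rat_mult)
  qed
qed

lemma additive_sum:
  fixes \<phi> :: "real \<Rightarrow> real"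
  assumes add: "\<forall>x y. \<phi> (x + y) = \<phi> x + \<phi> y"
  shows "\<phi> 0 = 0" "\<phi> (sum f S) = sum (\<lambda>j. \<phi> (f j)) S"
proof -
  have "\<phi> (0 + 0) = \<phi> 0 + \<phi> 0" using add by blast
  then show z: "\<phi> 0 = 0" by simp
  show "\<phi> (sum f S) = sum (\<lambda>j. \<phi> (f j)) S"
  proof (induction S rule: infinite_finite_induct)
    case (infinite A) then show ?case using z by simp
  next
    case empty then show ?case using z by simp
  next
    case (insert x F) then show ?case using add by simp
  qed
qed

lemma kernel_phi:
  fixes A :: "real^'n::finite^'m::finite" and \<phi> :: "real \<Rightarrow> real"
  assumes rat: "\<forall>i j. A $ i $ j \<in> \<rat>"
    and add: "\<forall>x y. \<phi> (x + y) = \<phi> x + \<phi> y"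
    and hom: "\<forall>q x. q \<in> \<rat> \<longrightarrow> \<phi> (q * x) = q * \<phi> x"
    and x: "A *v x = 0"
  shows "A *v (\<chi> i. \<phi> (x $ i)) = 0"
proof -
  have "(A *v (\<chi> i. \<phi> (x $ i))) $ k = 0" for k
  proof -
    have "(A *v (\<chi> i. \<phi> (x $ i))) $ k = (\<Sum>j\<in>UNIV. A $ k $ j * \<phi> (x $ j))"
      by (simp add: matrix_vector_mult_def)
    also have "\<dots> = (\<Sum>j\<in>UNIV. \<phi> (A $ k $ j * x $ j))" using hom rat by simp
    also have "\<dots> = \<phi> (\<Sum>j\<in>UNIV. A $ k $ j * x $ j)" by (rule additive_sum(2)[OF add, symmetric])
    also have "(\<Sum>j\<in>UNIV. A $ k $ j * x $ j) = (A *v x) $ k" by (simp add: matrix_vector_mult_def)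
    finally show ?thesis using x additive_sum(1)[OF add] by simp
  qed
  then show ?thesis by (simp add: vec_eq_iff)
qed

lemma rat_vec_int:
  fixes u :: "real^'n::finite"
  assumes r: "\<forall>i. u $ i \<in> \<rat>" and u0: "u \<noteq> 0"
  shows "\<exists>z s. s > 0 \<and> u = s *\<^sub>R (\<chi> i. of_int (z i)) \<and> Gcd (range z) = (1::int)"
proof -
  have "\<forall>i. \<exists>p::int \<times> int. snd p > 0 \<and> u $ i = of_int (fst p) / of_int (snd p)"
  proof
    fix i
    from r have "u $ i \<in> \<rat>" by blast
    then obtain a b :: int where "b > 0" "u $ i = of_int a / of_int b" by (auto elim: Rats_cases')
    then show "\<exists>p::int \<times> int. snd p > 0 \<and> u $ i = of_int (fst p) / of_int (snd p)"
      by (intro exI[of _ "(a, b)"]) auto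
  qed
  then obtain p where p: "\<forall>i. snd (p i) > 0 \<and> u $ i = of_int (fst (p i)) / of_int (snd (p i))"
    by metis
  define a where "a i = fst (p i)" for i
  define b where "b i = snd (p i)" for i
  have bpos: "b i > 0" and ua: "u $ i = of_int (a i) / of_int (b i)" for i
    using p unfolding a_def b_def by auto
  define D where "D = prod b UNIV"
  have Dpos: "D > 0" unfolding D_def using bpos by (simp add: prod_pos)
  define z0 where "z0 i = a i * prod b (UNIV - {i})" for i
  have z0u: "of_int (z0 i) = of_int D * u $ i" for i
  proof -
    have "D = b i * prod b (UNIV - {i})" unfolding D_def by (simp add: prod.remove)
    then show ?thesis unfolding z0_def using bpos[of i] ua[of i] by simp
  qed
  obtain k where k: "u $ k \<noteq> 0" using u0 by (auto simp: vec_eq_iff)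
  have z0k: "z0 k \<noteq> 0"
  proof
    assume "z0 k = 0"
    then have "of_int D * u $ k = 0" using z0u[of k] by simp
    then show False using Dpos k by simp
  qed
  define d where "d = Gcd (range z0)"
  have d0: "d \<noteq> 0" unfolding d_def using z0k by auto
  have dpos: "d > 0" using d0 Gcd_int_greater_eq_0[of "range z0"] unfolding d_def by linarith
  define z where "z i = z0 i div d" for i
  have z0z: "z0 i = d * z i" for i
    unfolding z_def d_def by (simp add: Gcd_dvd)
  have rz: "range z0 = (*) d ` range z" using z0z by auto
  have "Gcd (range z0) = normalize (d * Gcd (range z))" by (simp only: rz Gcd_mult)
  then have "d = normalize (d * Gcd (range z))" by (simp only: d_def)
  also have "\<dots> = d * Gcd (range z)" using dpos Gcd_int_greater_eq_0[of "range z"]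
    by (simp add: abs_mult)
  finally have G: "Gcd (range z) = 1" using d0 by simp
  have "u = (of_int d / of_int D) *\<^sub>R (\<chi> i. of_int (z i))"
  proof -
    have "u $ i = of_int d / of_int D * of_int (z i)" for i
      using z0u[of i] z0z[of i] Dpos by (simp add: field_simps)
    then show ?thesis by (simp add: vec_eq_iff)
  qed
  moreover have "of_int d / of_int D > (0::real)" using dpos Dpos by simp
  ultimately show ?thesis using G by blast
qed


definition Tp :: "real^'n::finite^'m::finite \<Rightarrow> 'n pv set" where
  "Tp A = {(axis i 1, axis i 1) | i. A *v axis i 1 \<noteq> 0}"

lemma posp_scale: "t > 0 \<Longrightarrow> posp (t *\<^sub>R g) = t *\<^sub>R posp g"
  by (simp add: posp_def vec_eq_iff prod_eq_iff max_def mult_le_0_iff zero_le_mult_iff)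

lemma onedim_classify:
  fixes A :: "real^'n::finite^'m::finite"
  assumes rat: "\<forall>i j. A $ i $ j \<in> \<rat>"
    and v: "v \<in> CA A" "v \<noteq> 0" and od: "onedim A v"
  shows "\<exists>t>0. \<exists>u \<in> S_set A \<union> Tp A. v = t *\<^sub>R u"
proof (cases "\<exists>i. fst v $ i > 0 \<and> snd v $ i > 0")
  case True
  then obtain i where i: "fst v $ i > 0" "snd v $ i > 0" by blast
  have ss: "subsupp (axis i 1, axis i 1) v" unfolding subsupp_def using i by (auto simp: axis_def)
  have "A *v (fst (axis i 1, axis i 1) - snd (axis i (1::real), axis i 1)) = 0" by simp
  with ss od obtain c where c: "(axis i 1, axis i 1) = c *\<^sub>R v" unfolding onedim_def by blast
  have c1: "1 = c * fst v $ i" using arg_cong[OF c, of "\<lambda>p. fst p $ i"] by (simp add: axis_def)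
  have cpos: "c > 0"
  proof (rule ccontr)
    assume "\<not> c > 0"
    then have "c * fst v $ i \<le> 0" using i by (simp add: mult_nonpos_nonneg)
    then show False using c1 by simp
  qed
  have col: "A *v axis i 1 \<noteq> 0"
  proof
    assume col0: "A *v axis i 1 = 0"
    have ss': "subsupp (axis i 1, 0) v" unfolding subsupp_def using i by (auto simp: axis_def)
    have "A *v (fst (axis i 1, 0::real^'n) - snd (axis i (1::real), 0::real^'n)) = 0" using col0 by simp
    with ss' od obtain c' where c': "(axis i 1, 0) = c' *\<^sub>R v" unfolding onedim_def by blast
    have "0 = c' * snd v $ i" using arg_cong[OF c', of "\<lambda>p. snd p $ i"] by simp
    then have "c' = 0" using i by simp
    then have "(axis i (1::real), 0::real^'n) = 0" using c' by simp
    then have "axis i (1::real) = 0" by (simp add: zero_prod_def)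
    then show False by (simp add: axis_eq_0_iff)
  qed
  have "v = (1 / c) *\<^sub>R (axis i 1, axis i 1)" using c cpos by simp
  moreover have "(axis i 1, axis i 1) \<in> Tp A" unfolding Tp_def using col by blast
  moreover have "1 / c > 0" using cpos by simp
  ultimately show ?thesis by blast
next
  case False
  have vnn: "fst v $ i \<ge> 0" "snd v $ i \<ge> 0" for i using v(1) by (auto simp: CA_iff)
  have dis: "fst v $ i = 0 \<or> snd v $ i = 0" for i
  proof -
    have "\<not> (0 < fst v $ i \<and> 0 < snd v $ i)" using False by blast
    then show ?thesis using vnn[of i] by linarith
  qed
  define g0 where "g0 = fst v - snd v"
  have mx: "max (fst v $ i - snd v $ i) 0 = fst v $ i \<and> max (- (fst v $ i - snd v $ i)) 0 = snd v $ i \<and> max (snd v $ i - fst v $ i) 0 = snd v $ i" for i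
    using dis[of i] vnn[of i] by auto
  have pv: "posp g0 = v"
    unfolding g0_def posp_def by (simp add: prod_eq_iff vec_eq_iff mx)
  have p0: "posp 0 = (0::'n pv)" by (simp add: posp_def zero_prod_def vec_eq_iff)
  have g00: "g0 \<noteq> 0"
  proof
    assume "g0 = 0"
    then have "v = posp 0" using pv by simp
    then show False using p0 v(2) by simp
  qed
  have kg: "A *v g0 = 0" using v(1) unfolding g0_def by (simp add: CA_iff)
  have od1: "\<exists>c. x = c *\<^sub>R g0" if kx: "A *v x = 0" and sx: "\<And>i. g0 $ i = 0 \<Longrightarrow> x $ i = 0" for x
  proof -
    define w where "w = ((\<chi> i. if fst v $ i \<noteq> 0 then x $ i else 0), (\<chi> i. if snd v $ i \<noteq> 0 then - x $ i else 0))"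
    have e1: "fst w - snd w = x"
    proof -
      have "(fst w - snd w) $ i = x $ i" for i
      proof (cases "fst v $ i = 0")
        case True
        show ?thesis
        proof (cases "snd v $ i = 0")
          case True
          then have "g0 $ i = 0" using \<open>fst v $ i = 0\<close> unfolding g0_def by simp
          then show ?thesis using sx[of i] True \<open>fst v $ i = 0\<close> unfolding w_def by simp
        next
          case False
          then show ?thesis using \<open>fst v $ i = 0\<close> unfolding w_def by simp
        qed
      next
        case False
        then have "snd v $ i = 0" using dis[of i] by blast
        then show ?thesis using False unfolding w_def by simp
      qed
      then show ?thesis by (simp add: vec_eq_iff)
    qed
    have s: "subsupp w v" unfolding subsupp_def w_def by simp
    have "A *v (fst w - snd w) = 0" by (simp only: e1 kx)
    then obtain c where c: "w = c *\<^sub>R v" using s od unfolding onedim_def by blast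
    have "x = fst w - snd w" by (simp only: e1)
    also have "\<dots> = c *\<^sub>R (fst v - snd v)" by (simp add: c scaleR_diff_right)
    finally show ?thesis unfolding g0_def by blast
  qed
  from rat_functional obtain \<phi> :: "real \<Rightarrow> real" where \<phi>all: "(\<forall>x. \<phi> x \<in> \<rat>) \<and> \<phi> 1 = 1 \<and> (\<forall>x y. \<phi> (x + y) = \<phi> x + \<phi> y)
     \<and> (\<forall>q x. q \<in> \<rat> \<longrightarrow> \<phi> (q * x) = q * \<phi> x)" by (elim exE)
  note \<phi> = conjunct1[OF \<phi>all] conjunct1[OF conjunct2[OF \<phi>all]] conjunct1[OF conjunct2[OF conjunct2[OF \<phi>all]]]
    conjunct2[OF conjunct2[OF conjunct2[OF \<phi>all]]]
  have \<phi>0: "\<phi> 0 = 0" using additive_sum(1)[OF \<phi>(3)] .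
  have "\<phi> (1 + -1) = \<phi> 1 + \<phi> (-1)" using \<phi>(3) by blast
  then have \<phi>m1: "\<phi> (-1) = -1" using \<phi>0 \<phi>(2) by simp
  obtain k where k: "g0 $ k \<noteq> 0" using g00 by (auto simp: vec_eq_iff)
  define u where "u = (1 / \<bar>g0 $ k\<bar>) *\<^sub>R g0"
  have ku: "A *v u = 0" unfolding u_def by (simp add: matrix_vector_mult_scaleR kg)
  define h where "h = (\<chi> i. \<phi> (u $ i))"
  have kh: "A *v h = 0" unfolding h_def by (rule kernel_phi[OF rat \<phi>(3) \<phi>(4) ku])
  have "\<And>i. g0 $ i = 0 \<Longrightarrow> h $ i = 0" unfolding h_def u_def using \<phi>0 by simp
  then obtain c where c: "h = c *\<^sub>R g0" using od1[OF kh] by blast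
  have uk: "u $ k = 1 \<or> u $ k = -1" unfolding u_def using k by (simp add: abs_if)
  have "h $ k = u $ k" unfolding h_def using uk \<phi>(2) \<phi>m1 by auto
  then have "c * g0 $ k = g0 $ k / \<bar>g0 $ k\<bar>" using c unfolding u_def by simp
  then have "c = 1 / \<bar>g0 $ k\<bar>" using k by (simp add: field_simps)
  then have hu: "h = u" using c unfolding u_def by simp
  have ur: "\<forall>i. u $ i \<in> \<rat>"
  proof
    fix i
    have "u $ i = \<phi> (u $ i)" using arg_cong[OF hu, of "\<lambda>x. x $ i"] unfolding h_def by simp
    then show "u $ i \<in> \<rat>" using \<phi>(1) by metis
  qed
  have u0: "u \<noteq> 0" unfolding u_def using g00 k by simp
  obtain z s where zs: "s > 0" "u = s *\<^sub>R (\<chi> i. of_int (z i))" "Gcd (range z) = (1::int)"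
    using rat_vec_int[OF ur u0] by blast
  define g :: "real^'n" where "g = (\<chi> i. of_int (z i))"
  define t where "t = \<bar>g0 $ k\<bar> * s"
  have tpos: "t > 0" unfolding t_def using k zs(1) by simp
  have g0g: "g0 = t *\<^sub>R g"
  proof -
    have "g0 = \<bar>g0 $ k\<bar> *\<^sub>R u" unfolding u_def using k by simp
    then show ?thesis unfolding t_def g_def using zs(2) by simp
  qed
  have gc: "g \<in> circuits A"
    unfolding circuits_def
  proof (intro CollectI conjI)
    show "A *v g = 0" using kg g0g tpos by (simp add: matrix_vector_mult_scaleR)
    show "g \<noteq> 0" using g00 g0g by auto
    show "\<exists>z :: 'n \<Rightarrow> int. (\<forall>i. g $ i = of_int (z i)) \<and> Gcd (range z) = 1"
      using zs(3) unfolding g_def by (intro exI[of _ z]) simp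
    show "\<not> (\<exists>x. A *v x = 0 \<and> x \<noteq> 0 \<and> supp x \<subset> supp g)"
    proof
      assume "\<exists>x. A *v x = 0 \<and> x \<noteq> 0 \<and> supp x \<subset> supp g"
      then obtain x where x: "A *v x = 0" "x \<noteq> 0" "supp x \<subset> supp g" by blast
      have sg: "supp g = supp g0" unfolding g0g supp_def using tpos by simp
      have "\<And>i. g0 $ i = 0 \<Longrightarrow> x $ i = 0" using x(3) sg unfolding supp_def by blast
      then obtain c where "x = c *\<^sub>R g0" using od1[OF x(1)] by blast
      then have "supp x = supp g0" using x(2) unfolding supp_def by auto
      then show False using x(3) sg by simp
    qed
  qed
  have "v = t *\<^sub>R posp g" using pv g0g posp_scale[OF tpos] by metis
  moreover have "posp g \<in> S_set A" unfolding S_set_posp using gc by blast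
  ultimately show ?thesis using tpos by blast
qed


definition sig :: "'n::finite pv \<Rightarrow> real" where
  "sig p = (\<Sum>i\<in>UNIV. fst p $ i + snd p $ i)"

lemma sig_add: "sig (a + b) = sig a + sig b"
  by (simp add: sig_def sum.distrib algebra_simps)

lemma sig_scale: "sig (c *\<^sub>R a) = c * sig a"
  by (simp add: sig_def sum_distrib_left algebra_simps)

lemma sig_diff: "sig (a - b) = sig a - sig b"
  by (simp add: sig_def sum_subtractf algebra_simps)

lemma CA_convex_cone:
  fixes A :: "real^'n::finite^'m::finite"
  shows "convex_cone (CA A)"
  unfolding convex_cone_def conic_def
proof (intro conjI allI impI)
  show "CA A \<noteq> {}" using CA_iff[of 0 A] by auto
  show "convex (CA A)" unfolding convex_def
  proof (intro ballI allI impI)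
    fix x y and u v :: real assume x: "x \<in> CA A" and y: "y \<in> CA A" and uv: "0 \<le> u" "0 \<le> v" "u + v = 1"
    have "fst (u *\<^sub>R x + v *\<^sub>R y) - snd (u *\<^sub>R x + v *\<^sub>R y) = u *\<^sub>R (fst x - snd x) + v *\<^sub>R (fst y - snd y)"
      by (simp add: algebra_simps)
    then have "A *v (fst (u *\<^sub>R x + v *\<^sub>R y) - snd (u *\<^sub>R x + v *\<^sub>R y)) = 0"
      using x y by (simp add: CA_iff matrix_vector_right_distrib matrix_vector_mult_scaleR)
    moreover have "fst (u *\<^sub>R x + v *\<^sub>R y) $ i \<ge> 0 \<and> snd (u *\<^sub>R x + v *\<^sub>R y) $ i \<ge> 0" for i
      using x y uv by (simp add: CA_iff)
    ultimately show "u *\<^sub>R x + v *\<^sub>R y \<in> CA A" by (simp add: CA_iff)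
  qed
  fix x and c :: real assume "x \<in> CA A" "0 \<le> c"
  then show "c *\<^sub>R x \<in> CA A" using ray_subset[of x A] unfolding ray_def by blast
qed

lemma ray_scale: "t > 0 \<Longrightarrow> ray (t *\<^sub>R u) = ray u"
  unfolding ray_def
proof (intro set_eqI iffI)
  fix x assume t: "t > 0" and "x \<in> {s *\<^sub>R t *\<^sub>R u |s. 0 \<le> s}"
  then obtain s where "x = (s * t) *\<^sub>R u" "s \<ge> 0" by auto
  then show "x \<in> {s *\<^sub>R u |s. 0 \<le> s}" using t by auto
next
  fix x assume t: "t > 0" and "x \<in> {s *\<^sub>R u |s. 0 \<le> s}"
  then obtain s where "x = s *\<^sub>R u" "s \<ge> 0" by auto
  then have "x = (s / t) *\<^sub>R t *\<^sub>R u" "s / t \<ge> 0" using t by auto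
  then show "x \<in> {s *\<^sub>R t *\<^sub>R u |s. 0 \<le> s}" by blast
qed

lemma extreme_onedim:
  fixes A :: "real^'n::finite^'m::finite"
  assumes e: "e extreme_point_of {p \<in> CA A. sig p = 1}"
  shows "onedim A e"
  unfolding onedim_def
proof (intro allI impI)
  let ?K = "{p \<in> CA A. sig p = 1}"
  have eK: "e \<in> CA A" "sig e = 1" using e unfolding extreme_point_of_def by auto
  fix w assume "A *v (fst w - snd w) = 0 \<and> subsupp w e"
  then have kw: "A *v (fst w - snd w) = 0" and sw: "subsupp w e" by auto
  define w' where "w' = w - sig w *\<^sub>R e"
  have ke: "A *v (fst e - snd e) = 0" using eK by (simp add: CA_iff)
  have eq: "fst w' - snd w' = (fst w - snd w) - sig w *\<^sub>R (fst e - snd e)"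
    unfolding w'_def by (simp add: algebra_simps)
  have "A *v (fst w' - snd w') = A *v (fst w - snd w) - A *v (sig w *\<^sub>R (fst e - snd e))"
    by (simp only: eq matrix_vector_mult_diff_distrib[of A "fst w - snd w" "sig w *\<^sub>R (fst e - snd e)"])
  also have "\<dots> = 0" by (simp only: kw ke matrix_vector_mult_scaleR scaleR_zero_right diff_zero)
  finally have kw': "A *v (fst w' - snd w') = 0" .
  have sw': "subsupp w' e" using sw unfolding subsupp_def w'_def by simp
  have sg: "sig w' = 0" unfolding w'_def using eK by (simp add: sig_diff sig_scale)
  obtain t where t: "t > 0" "e + t *\<^sub>R w' \<in> CA A" "e + (-t) *\<^sub>R w' \<in> CA A"
    using perturb[OF eK(1) kw' sw'] by blast
  have K1: "e + t *\<^sub>R w' \<in> ?K" "e + (-t) *\<^sub>R w' \<in> ?K"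
    using t eK sg by (auto simp: sig_add sig_scale sig_diff)
  have "w' = 0"
  proof (rule ccontr)
    assume w0: "w' \<noteq> 0"
    have d: "e + t *\<^sub>R w' - (e + (-t) *\<^sub>R w') = (t + t) *\<^sub>R w'"
    proof -
      have "e + t *\<^sub>R w' - (e + (-t) *\<^sub>R w') = t *\<^sub>R w' + t *\<^sub>R w'" by (simp add: algebra_simps)
      also have "\<dots> = (t + t) *\<^sub>R w'" by (rule scaleR_add_left[symmetric])
      finally show ?thesis .
    qed
    have "(t + t) *\<^sub>R w' \<noteq> 0" using w0 t(1) by simp
    moreover have "(t + t) *\<^sub>R w' = 0" if eq: "e + t *\<^sub>R w' = e + (-t) *\<^sub>R w'"
    proof -
      have "e + t *\<^sub>R w' - (e + (-t) *\<^sub>R w') = 0" using eq by (simp only: right_minus_eq)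
      then show ?thesis by (metis d)
    qed
    ultimately have neq: "e + t *\<^sub>R w' \<noteq> e + (-t) *\<^sub>R w'" by blast
    have h: "(1/2::real) *\<^sub>R e + (1/2) *\<^sub>R e = e" by (simp flip: scaleR_add_left)
    have mid: "midpoint (e + t *\<^sub>R w') (e + (-t) *\<^sub>R w') = e"
      by (simp add: midpoint_def algebra_simps h)
    have "midpoint (e + t *\<^sub>R w') (e + (-t) *\<^sub>R w') \<in> open_segment (e + t *\<^sub>R w') (e + (-t) *\<^sub>R w')"
      by (rule midpoint_in_open_segment[THEN iffD2, OF neq])
    then have "e \<in> open_segment (e + t *\<^sub>R w') (e + (-t) *\<^sub>R w')" by (simp only: mid)
    then show False using e K1 unfolding extreme_point_of_def by blast
  qed
  then have "w = sig w *\<^sub>R e" unfolding w'_def by simp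
  then show "\<exists>c. w = c *\<^sub>R e" by blast
qed

lemma K_compact:
  fixes A :: "real^'n::finite^'m::finite"
  shows "compact {p \<in> CA A. sig p = 1}"
  unfolding compact_eq_bounded_closed
proof
  show "bounded {p \<in> CA A. sig p = 1}"
    unfolding bounded_iff
  proof (intro exI ballI)
    fix p assume p: "p \<in> {p \<in> CA A. sig p = 1}"
    obtain a b where ab: "p = (a, b)" by (cases p)
    have nn: "a $ i \<ge> 0" "b $ i \<ge> 0" for i using p ab by (auto simp: CA_iff)
    have "norm p \<le> norm a + norm b" unfolding ab by (rule norm_Pair_le)
    also have "\<dots> \<le> (\<Sum>i\<in>UNIV. \<bar>a $ i\<bar>) + (\<Sum>i\<in>UNIV. \<bar>b $ i\<bar>)"
      by (intro add_mono norm_le_l1_cart)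
    also have "\<dots> = sig p" unfolding ab sig_def using nn by (simp add: sum.distrib)
    finally show "norm p \<le> 1" using p by simp
  qed
  have "{p \<in> CA A. sig p = 1} = {p. A *v (fst p - snd p) = 0} \<inter> {p. \<forall>i. fst p $ i \<ge> 0} \<inter> {p. \<forall>i. snd p $ i \<ge> 0} \<inter> {p. sig p = 1}"
    by (auto simp: CA_iff)
  also have "closed \<dots>"
  proof (intro closed_Int)
    show "closed {p :: 'n pv. A *v (fst p - snd p) = 0}"
      by (intro closed_Collect_eq continuous_on_compose2[OF matrix_vector_mult_linear_continuous_on] continuous_intros) auto
    show "closed {p :: 'n pv. \<forall>i. fst p $ i \<ge> 0}"
      by (intro closed_Collect_all closed_Collect_le continuous_intros)
    show "closed {p :: 'n pv. \<forall>i. snd p $ i \<ge> 0}"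
      by (intro closed_Collect_all closed_Collect_le continuous_intros)
    show "closed {p :: 'n pv. sig p = 1}" unfolding sig_def
      by (intro closed_Collect_eq continuous_intros)
  qed
  finally show "closed {p \<in> CA A. sig p = 1}" .
qed

lemma K_convex:
  fixes A :: "real^'n::finite^'m::finite"
  shows "convex {p \<in> CA A. sig p = 1}"
  unfolding convex_def
proof (intro ballI allI impI)
  fix x y and u v :: real assume x: "x \<in> {p \<in> CA A. sig p = 1}" and y: "y \<in> {p \<in> CA A. sig p = 1}"
    and uv: "0 \<le> u" "0 \<le> v" "u + v = 1"
  have "u *\<^sub>R x + v *\<^sub>R y \<in> CA A"
    using CA_convex_cone[of A] x y uv unfolding convex_cone_def convex_def by blast
  moreover have "sig (u *\<^sub>R x + v *\<^sub>R y) = 1" using x y uv by (simp add: sig_add sig_scale)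
  ultimately show "u *\<^sub>R x + v *\<^sub>R y \<in> {p \<in> CA A. sig p = 1}" by blast
qed


lemma X_elem:
  fixes A :: "real^'n::finite^'m::finite"
  assumes "u \<in> S_set A \<union> Tp A"
  shows "u \<in> CA A" "u \<noteq> 0" "onedim A u"
proof -
  have "u \<in> CA A \<and> u \<noteq> 0 \<and> onedim A u"
  proof -
    from assms consider (S) g where "g \<in> circuits A" "u = posp g"
      | (T) i where "A *v axis i 1 \<noteq> 0" "u = (axis i 1, axis i 1)"
      unfolding S_set_posp Tp_def by blast
    then show ?thesis
    proof cases
      case S then show ?thesis using S_elem[OF S(1)] by simp
    next
      case T then show ?thesis using T_elem[OF T(1)] by simp
    qed
  qed
  then show "u \<in> CA A" "u \<noteq> 0" "onedim A u" by auto
qed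

theorem corollary2:
  fixes A :: "real^'n^'m"
  assumes rat: "\<forall>i j. A $ i $ j \<in> \<rat>"
  shows "pointed (CA A) \<and>
    (\<exists>T'. T' \<subseteq> T_set \<and> card T' \<le> CARD('n)
       \<and> convex_cone hull (S_set A \<union> T') = CA A
       \<and> {ray v | v. extreme_ray (CA A) v} = {ray v | v. v \<in> S_set A \<union> T'})"
proof (intro conjI exI[of _ "Tp A"])
  let ?X = "S_set A \<union> Tp A"
  show "pointed (CA A)" unfolding pointed_def
  proof (intro set_eqI iffI)
    fix x assume "x \<in> CA A \<inter> uminus ` CA A"
    then obtain y where x: "x \<in> CA A" and y: "y \<in> CA A" and xy: "x = - y" by auto
    have "fst x $ i = 0 \<and> snd x $ i = 0" for i
      using x y xy by (auto simp: CA_iff intro: order.antisym)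
    then show "x \<in> {0}" by (simp add: prod_eq_iff vec_eq_iff)
  next
    fix x :: "'n pv" assume "x \<in> {0}"
    moreover have "(0 :: 'n pv) \<in> CA A" by (simp add: CA_iff)
    ultimately show "x \<in> CA A \<inter> uminus ` CA A" by (auto intro: image_eqI[of 0 _ 0])
  qed
  show "Tp A \<subseteq> T_set" unfolding Tp_def T_set_def by blast
  have "Tp A \<subseteq> range (\<lambda>i. (axis i 1, axis i 1))" unfolding Tp_def by blast
  then have "card (Tp A) \<le> card (range (\<lambda>i::'n. (axis i (1::real), axis i (1::real))))"
    by (intro card_mono) auto
  also have "\<dots> \<le> CARD('n)" by (rule card_image_le) simp
  finally show "card (Tp A) \<le> CARD('n)" .
  show "convex_cone hull ?X = CA A"
  proof
    show "convex_cone hull ?X \<subseteq> CA A"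
      by (rule hull_minimal[of ?X "CA A" convex_cone, OF _ CA_convex_cone]) (use X_elem in blast)
    show "CA A \<subseteq> convex_cone hull ?X"
    proof
      fix c assume c: "c \<in> CA A"
      show "c \<in> convex_cone hull ?X"
      proof (cases "c = 0")
        case True then show ?thesis using convex_cone_hull_contains_0 by simp
      next
        case False
        let ?K = "{p \<in> CA A. sig p = 1}"
        obtain i where i: "fst c $ i > 0 \<or> snd c $ i > 0" using pv_nonzero_pos[OF c False] by blast
        have nn: "\<And>j. fst c $ j + snd c $ j \<ge> 0" using c by (auto simp: CA_iff)
        have "fst c $ i + snd c $ i \<le> sig c" unfolding sig_def
          by (rule member_le_sum) (use nn in auto)
        moreover have "fst c $ i + snd c $ i > 0" using i c by (auto simp: CA_iff add_pos_nonneg add_nonneg_pos)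
        ultimately have sp: "sig c > 0" by linarith
        define p where "p = (1 / sig c) *\<^sub>R c"
        have "(1 / sig c) *\<^sub>R c \<in> CA A"
          by (rule convex_cone_scaleR[OF CA_convex_cone]) (use sp c in auto)
        then have pK: "p \<in> ?K" unfolding p_def using sp by (simp add: sig_scale)
        have ext: "{x. x extreme_point_of ?K} \<subseteq> convex_cone hull ?X"
        proof
          fix e assume "e \<in> {x. x extreme_point_of ?K}"
          then have e: "e extreme_point_of ?K" by simp
          have eK: "e \<in> CA A" "sig e = 1" using e unfolding extreme_point_of_def by auto
          have "e \<noteq> 0" using eK(2) by (auto simp: sig_def)
          then obtain t u where tu: "t > 0" "u \<in> ?X" "e = t *\<^sub>R u"
            using onedim_classify[OF rat eK(1) _ extreme_onedim[OF e]] by blast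
          show "e \<in> convex_cone hull ?X"
            unfolding tu(3)
            by (rule convex_cone_scaleR[OF convex_cone_convex_cone_hull]) (use tu(1) hull_inc[OF tu(2)] in auto)
        qed
        have "?K = convex hull {x. x extreme_point_of ?K}"
          by (rule Krein_Milman_Minkowski[OF K_compact K_convex])
        also have "\<dots> \<subseteq> convex_cone hull ?X"
          by (rule hull_minimal[of _ _ convex, OF ext convex_convex_cone_hull])
        finally have "p \<in> convex_cone hull ?X" using pK by blast
        then have "sig c *\<^sub>R p \<in> convex_cone hull ?X"
          by (rule convex_cone_scaleR[OF convex_cone_convex_cone_hull, rotated]) (use sp in simp)
        then show ?thesis unfolding p_def using sp by simp
      qed
    qed
  qed
  show "{ray v | v. extreme_ray (CA A) v} = {ray v | v. v \<in> ?X}"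
  proof (intro set_eqI iffI)
    fix r assume "r \<in> {ray v | v. extreme_ray (CA A) v}"
    then obtain v where r: "r = ray v" and ev: "extreme_ray (CA A) v" by blast
    have v0: "v \<noteq> 0" and f: "ray v face_of CA A" using ev unfolding extreme_ray_def by auto
    have "v \<in> ray v" unfolding ray_def by (auto intro: exI[of _ 1])
    then have vC: "v \<in> CA A" using face_of_imp_subset[OF f] by blast
    obtain t u where tu: "t > 0" "u \<in> ?X" "v = t *\<^sub>R u"
      using onedim_classify[OF rat vC v0 face_imp_onedim[OF vC f]] by blast
    have "r = ray u" using r tu ray_scale by simp
    then show "r \<in> {ray v | v. v \<in> ?X}" using tu(2) by blast
  next
    fix r assume "r \<in> {ray v | v. v \<in> ?X}"
    then obtain u where r: "r = ray u" and u: "u \<in> ?X" by blast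
    have "extreme_ray (CA A) u" unfolding extreme_ray_def
      using X_elem[OF u] onedim_imp_face by blast
    then show "r \<in> {ray v | v. extreme_ray (CA A) v}" using r by blast
  qed
qed

end
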